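(* Let $\varepsilon>0$, let $w_1,\dots,w_{N-1}\in\mathbb D$, and let $m$ be a positive integer. Set $U_\varepsilon=\bigcup_{x\in[0,1]}D(x,\varepsilon)$. Then there exist a holomorphic function $h$ on $\mathbb D$ and a point $\zeta^*\in\mathbb D$ such that $h(\mathbb D)\subset U_\varepsilon$, $h(0)=0$, $h^{(k)}(w_j)=0$ for $0\le k\le m-1$ and $1\le j\le N-1$, $h(\zeta^* )=1$, and $h^{(k)}(\zeta^* )=0$ for $1\le k\le m-1$.
   Context: $\mathbb D$ is the open unit disc in $\mathbb C$ and $D(x,\varepsilon)$ the open disc of centre $x$ and radius $\varepsilon$. *)

theory Defs
  imports "HOL-Complex_Analysis.Complex_Analysis"
begin

definition U_eps :: "real \<Rightarrow> complex set" where
  "U_eps \<epsilon> = (\<Union>x\<in>{0..1::real}. ball (complex_of_real x) \<epsilon>)"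

end

theory Submission
  imports Defs
begin

lemma hd_pow:
  fixes p :: complex
  shows "i \<le> m \<Longrightarrow> \<exists>c. (deriv ^^ i) (\<lambda>z. (z-p)^m) = (\<lambda>z. c*(z-p)^(m-i))"
proof (induction i)
  case 0 then show ?case by (intro exI[of _ 1]) auto
next
  case (Suc i)
  then obtain c where c: "(deriv ^^ i) (\<lambda>z. (z-p)^m) = (\<lambda>z. c*(z-p)^(m-i))" by auto
  have "deriv (\<lambda>z. c*(z-p)^(m-i)) = (\<lambda>z. c * of_nat (m-i) * (z-p)^(m - Suc i))"
  proof
    fix z
    have "((\<lambda>z. c*(z-p)^(m-i)) has_field_derivative c * (of_nat (m-i) * (z-p)^(m-i-1) * 1)) (at z)"
      by (intro derivative_eq_intros) auto
    then show "deriv (\<lambda>z. c*(z-p)^(m-i)) z = c * of_nat (m-i) * (z-p)^(m - Suc i)"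
      by (simp add: DERIV_imp_deriv)
  qed
  then show ?case using c by (intro exI[of _ "c * of_nat (m-i)"]) simp
qed

lemma hd_zero:
  fixes f g :: "complex \<Rightarrow> complex"
  assumes g: "g holomorphic_on S" and S: "open S" and p: "p \<in> S"
    and eq: "\<And>z. z \<in> S \<Longrightarrow> f z = c + (z-p)^m * g z"
    and k: "k < m" and kc: "0 < k \<or> c = 0"
  shows "(deriv ^^ k) f p = 0"
proof -
  have ev: "eventually (\<lambda>z. f z = c + (z-p)^m * g z) (nhds p)"
    using eventually_nhds_in_open[OF S p] by eventually_elim (use eq in auto)
  have "(deriv ^^ k) f p = (deriv ^^ k) (\<lambda>z. c + (z-p)^m * g z) p"
    by (rule higher_deriv_cong_ev[OF ev refl])
  also have "\<dots> = (deriv ^^ k) (\<lambda>z. c) p + (deriv ^^ k) (\<lambda>z. (z-p)^m * g z) p"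
    by (rule higher_deriv_add) (use g S p in \<open>auto intro!: holomorphic_intros\<close>)
  also have "(deriv ^^ k) (\<lambda>z. c) p = 0" using kc by auto
  also have "(deriv ^^ k) (\<lambda>z. (z-p)^m * g z) p
     = (\<Sum>i = 0..k. of_nat (k choose i) * (deriv ^^ i) (\<lambda>z. (z-p)^m) p * (deriv ^^ (k-i)) g p)"
    by (rule higher_deriv_mult) (use g S p in \<open>auto intro!: holomorphic_intros\<close>)
  also have "\<dots> = 0"
  proof (rule sum.neutral, rule ballI)
    fix i assume "i \<in> {0..k}"
    then have "i \<le> m" "0 < m - i" using k by auto
    then obtain c' where "(deriv ^^ i) (\<lambda>z. (z-p)^m) = (\<lambda>z. c'*(z-p)^(m-i))" using hd_pow by blast
    then show "of_nat (k choose i) * (deriv ^^ i) (\<lambda>z. (z-p)^m) p * (deriv ^^ (k-i)) g p = 0"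
      using \<open>0 < m - i\<close> by simp
  qed
  finally show ?thesis by simp
qed

lemma blaschke_lt1:
  fixes z w :: complex
  assumes "norm z < 1" "norm w < 1"
  shows "norm (z - w) < norm (1 - cnj w * z)"
proof -
  obtain x y where z: "z = Complex x y" by (cases z)
  obtain a b where w: "w = Complex a b" by (cases w)
  have h1: "x^2 + y^2 < 1" "a^2+b^2 < 1" using assms by (auto simp: z w cmod_def)
  have id: "((1 - (a*x + b*y))^2 + (a*y - b*x)^2) - ((x-a)^2 + (y-b)^2) = (1 - (x^2+y^2)) * (1 - (a^2+b^2))"
    by algebra
  have "0 < (1 - (x^2+y^2)) * (1 - (a^2+b^2))" using h1 by simp
  then have "(x-a)^2 + (y-b)^2 < (1 - (a*x + b*y))^2 + (a*y - b*x)^2" using id by linarith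
  then have "sqrt ((x-a)^2 + (y-b)^2) < sqrt ((1 - (a*x + b*y))^2 + (a*y - b*x)^2)"
    by (simp add: real_sqrt_less_iff)
  then show ?thesis by (simp add: z w cmod_def power2_eq_square algebra_simps)
qed

lemma G_thin:
  fixes m :: nat and \<epsilon> :: real
  assumes e: "\<epsilon> > 0"
  shows "\<exists>\<delta>>0. \<forall>x y. \<bar>y\<bar> < \<delta> \<longrightarrow>
     (1 - (1 - ((1 - cos (of_real pi * Complex x y))/2)^m)^m) \<in> U_eps \<epsilon>"
proof -
  define G where "G = (\<lambda>v::complex. 1 - (1 - ((1 - cos (of_real pi * v))/2)^m)^m)"
  define K where "K = cbox (Complex 0 (-1)) (Complex 2 1)"
  have "continuous_on K G" unfolding G_def by (intro continuous_intros) auto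
  moreover have "compact K" unfolding K_def by simp
  ultimately have "uniformly_continuous_on K G" by (rule compact_uniformly_continuous)
  then obtain d where d: "d > 0" and dd: "\<And>x x'. x \<in> K \<Longrightarrow> x' \<in> K \<Longrightarrow> dist x' x < d \<Longrightarrow> dist (G x') (G x) < \<epsilon>"
    unfolding uniformly_continuous_on_def using e by metis
  have per: "G (Complex x y) = G (Complex (x - 2 * of_int k) y)" for x y k
  proof -
    define A where "A = of_real pi * Complex (x - 2 * of_int k) y"
    have e1: "of_real pi * Complex x y = A + complex_of_real (2 * pi * of_int k)"
      unfolding A_def by (simp add: complex_eq_iff algebra_simps)
    have c1: "cos (2 * pi * real_of_int k) = 1" by simp
    have s1: "sin (2 * pi * real_of_int k) = 0" by simp
    have "cos (A + complex_of_real (2 * pi * of_int k)) = cos A"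
      by (simp only: cos_add cos_of_real sin_of_real c1 s1) simp
    then show ?thesis unfolding G_def using e1 A_def by simp
  qed
  have real: "G (of_real x) = of_real (1 - (1 - ((1 - cos (pi * x))/2)^m)^m)" for x
    unfolding G_def by (simp add: cos_of_real[symmetric])
  have rng: "1 - (1 - ((1 - cos (pi * x))/2)^m)^m \<in> {0..1::real}" for x
  proof -
    have "(1 - cos (pi * x))/2 \<in> {0..1}" using cos_ge_minus_one[of "pi*x"] cos_le_one[of "pi*x"] by auto
    then have "((1 - cos (pi * x))/2)^m \<in> {0..1}" by (auto intro: power_le_one)
    then have "(1 - ((1 - cos (pi * x))/2)^m)^m \<in> {0..1}" by (auto intro: power_le_one)
    then show ?thesis by auto
  qed
  show ?thesis
  proof (intro exI[of _ "min d 1"] conjI allI impI)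
    show "0 < min d 1" using d by simp
    fix x y :: real assume y: "\<bar>y\<bar> < min d 1"
    define k where "k = \<lfloor>x/2\<rfloor>"
    define x' where "x' = x - 2 * of_int k"
    have x': "0 \<le> x'" "x' \<le> 2" unfolding x'_def k_def
      using of_int_floor_le[of "x/2"] real_of_int_floor_add_one_gt[of "x/2"] by linarith+
    have "Complex x' y \<in> K" "Complex x' 0 \<in> K" using x' y unfolding K_def cbox_complex_eq by auto
    moreover have "dist (Complex x' y) (Complex x' 0) < d" using y by (simp add: dist_norm cmod_def)
    ultimately have "dist (G (Complex x' y)) (G (Complex x' 0)) < \<epsilon>" using dd by blast
    moreover have "G (Complex x y) = G (Complex x' y)" unfolding x'_def by (rule per)
    moreover have "Complex x' 0 = of_real x'" by (simp add: complex_eq_iff)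
    ultimately have "G (Complex x y) \<in> ball (of_real (1 - (1 - ((1 - cos (pi * x'))/2)^m)^m)) \<epsilon>"
      using real by (simp add: dist_commute)
    then have "G (Complex x y) \<in> U_eps \<epsilon>" unfolding U_eps_def using rng by blast
    then show "(1 - (1 - ((1 - cos (of_real pi * Complex x y))/2)^m)^m) \<in> U_eps \<epsilon>" unfolding G_def .
  qed
qed

lemma factor_at:
  fixes f :: "complex \<Rightarrow> complex"
  assumes "f holomorphic_on S" "open S" "p \<in> S" "f p = 0"
  shows "\<exists>q. q holomorphic_on S \<and> (\<forall>z\<in>S. f z = (z-p) * q z)"
proof (intro exI conjI ballI)
  show "(\<lambda>z. if z = p then deriv f p else (f z - f p)/(z-p)) holomorphic_on S"
    by (rule pole_lemma_open) (use assms in auto)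
  fix z assume "z \<in> S"
  show "f z = (z-p) * (if z = p then deriv f p else (f z - f p)/(z-p))"
    using assms by auto
qed

theorem mainTheorem8:
  fixes \<epsilon> :: real and N m :: nat and w :: "nat \<Rightarrow> complex"
  assumes "\<epsilon> > 0"
    and "\<And>j. j \<in> {1..N-1} \<Longrightarrow> w j \<in> ball 0 1"
    and "m \<ge> 1"
  shows "\<exists>h \<zeta>. h holomorphic_on ball 0 1 \<and> \<zeta> \<in> ball 0 1
           \<and> h ` ball 0 1 \<subseteq> U_eps \<epsilon>
           \<and> h 0 = 0
           \<and> (\<forall>j\<in>{1..N-1}. \<forall>k<m. (deriv ^^ k) h (w j) = 0)
           \<and> h \<zeta> = 1
           \<and> (\<forall>k\<in>{1..m-1}. (deriv ^^ k) h \<zeta> = 0)"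
proof -
  note e = assms(1) and wD = assms(2) and m1 = assms(3)
  define D where "D = ball (0::complex) 1"
  define J where "J = {1..N-1}"
  have wn: "norm (w j) < 1" if "j \<in> J" for j using wD that unfolding J_def by auto
  define M where "M = (\<lambda>(a::complex) z. (z - a) / (1 - cnj a * z))"
  define B where "B = (\<lambda>z. z * (\<Prod>j\<in>J. M (w j) z))"
  have den: "1 - cnj (w j) * z \<noteq> 0" if "j \<in> J" "norm z \<le> 1" for j z
  proof
    assume "1 - cnj (w j) * z = 0"
    then have "norm (cnj (w j) * z) = 1" by (metis eq_iff_diff_eq_0 norm_one)
    moreover have "norm (cnj (w j) * z) < 1"
      using wn[OF that(1)] that(2) by (simp add: norm_mult) (smt (verit) mult_le_one norm_ge_zero mult_strict_right_mono mult_left_le)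
    ultimately show False by simp
  qed
  have Mlt: "norm (M (w j) z) < 1" if "j \<in> J" "z \<in> D" for j z
  proof -
    have "norm z < 1" using that by (simp add: D_def)
    have d: "norm (1 - cnj (w j) * z) > 0" using den[OF that(1)] \<open>norm z < 1\<close> by simp
    have "norm (z - w j) < norm (1 - cnj (w j) * z)"
      by (rule blaschke_lt1) (use \<open>norm z < 1\<close> wn that in auto)
    then show ?thesis using d by (simp add: M_def norm_divide)
  qed
  have Bn: "norm (B z) < 1" if "z \<in> D" for z
  proof -
    have "(\<Prod>j\<in>J. norm (M (w j) z)) \<le> 1"
      by (rule prod_le_1) (use Mlt[OF _ that] in \<open>auto intro: less_imp_le\<close>)
    then have "norm (\<Prod>j\<in>J. M (w j) z) \<le> 1" by (simp add: prod_norm)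
    moreover have "norm z < 1" using that by (simp add: D_def)
    ultimately show ?thesis unfolding B_def norm_mult
      by (smt (verit) mult_left_le norm_ge_zero)
  qed
  have Bhol: "B holomorphic_on D"
    unfolding B_def M_def D_def
    by (intro holomorphic_intros) (use den in auto)
  have B0: "B 0 = 0" by (simp add: B_def)
  have Bw: "B (w j) = 0" if "j \<in> J" for j
    unfolding B_def M_def using that by (auto intro!: prod_zero simp: J_def)
  have Bcont: "isCont B 1"
    unfolding B_def M_def
    by (intro continuous_intros) (use den wn in fastforce)
  have B1: "norm (B 1) = 1"
  proof -
    have "norm (M (w j) 1) = 1" if "j \<in> J" for j
    proof -
      have "1 - w j \<noteq> 0" using wn[OF that] by auto
      moreover have "1 - cnj (w j) * 1 = cnj (1 - w j)" by simp
      ultimately show ?thesis unfolding M_def by (simp add: norm_divide complex_mod_cnj del: complex_cnj_diff)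
    qed
    then show ?thesis unfolding B_def by (simp add: prod_norm[symmetric])
  qed
  obtain \<delta> where \<delta>: "\<delta> > 0" and thin: "\<And>x y. \<bar>y\<bar> < \<delta> \<Longrightarrow>
     (1 - (1 - ((1 - cos (of_real pi * Complex x y))/2)^m)^m) \<in> U_eps \<epsilon>"
    using G_thin[OF e, of m] by blast
  define \<Lambda> where "\<Lambda> = 2 * pi / \<delta> + 1"
  have \<Lambda>pos: "\<Lambda> > 0" using \<delta> by (simp add: \<Lambda>_def add_pos_nonneg)
  have \<Lambda>big: "2 * pi < \<delta> * \<Lambda>" using \<delta> by (simp add: \<Lambda>_def field_simps)
  define \<rho> where "\<rho> = 1 - exp (-\<Lambda>)"
  have \<rho>: "0 < \<rho>" "\<rho> < 1" using \<Lambda>pos by (auto simp: \<rho>_def)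
  obtain d where d: "d > 0" and dd: "\<And>z. dist z 1 < d \<Longrightarrow> dist (B z) (B 1) < 1 - \<rho>"
    using Bcont \<rho> unfolding continuous_at_eps_delta by (meson diff_gt_0_iff_gt)
  define r where "r = max (1/2) (1 - d/2)"
  define \<zeta> where "\<zeta> = complex_of_real r"
  have r: "0 < r" "r < 1" using d by (auto simp: r_def)
  have \<zeta>D: "\<zeta> \<in> D" using r by (simp add: \<zeta>_def D_def)
  have "dist \<zeta> 1 < d"
  proof -
    have "dist \<zeta> 1 = 1 - r" using r unfolding \<zeta>_def dist_norm
      by (metis abs_of_pos diff_gt_0_iff_gt norm_minus_commute norm_of_real of_real_1 of_real_diff)
    then show ?thesis using d by (simp add: r_def)
  qed
  then have "dist (B \<zeta>) (B 1) < 1 - \<rho>" by (rule dd)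
  then have t\<rho>: "norm (B \<zeta>) > \<rho>" using B1 norm_triangle_ineq2[of "B 1" "B \<zeta>"]
    by (simp add: dist_norm norm_minus_commute)
  define a where "a = B \<zeta>"
  define t where "t = norm a"
  have t: "\<rho> < t" "t < 1" "0 < t" using t\<rho> Bn[OF \<zeta>D] \<rho> by (auto simp: t_def a_def)
  define lam where "lam = ln (1 + t) - ln (1 - t)"
  have "ln (1 - t) < -\<Lambda>"
  proof -
    have "1 - t < exp (-\<Lambda>)" using t by (simp add: \<rho>_def)
    then have "ln (1 - t) < ln (exp (-\<Lambda>))" using t by (subst ln_less_cancel_iff) auto
    then show ?thesis by simp
  qed
  moreover have "ln (1 + t) > 0" using t by simp
  ultimately have lamLam: "lam > \<Lambda>" by (simp add: lam_def)
  then have lampos: "lam > 0" using \<Lambda>pos by simp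
  define u where "u = (\<lambda>z. B z * cnj a / complex_of_real t)"
  have un: "norm (u z) < 1" if "z \<in> D" for z
    using Bn[OF that] t by (simp add: u_def norm_mult norm_divide t_def)
  define v where "v = (\<lambda>z. (Ln (1 + u z) - Ln (1 - u z)) / complex_of_real lam)"
  define \<sigma> where "\<sigma> = (\<lambda>z. (1 - cos (complex_of_real pi * v z)) / 2)"
  define h where "h = (\<lambda>z. 1 - (1 - (\<sigma> z)^m)^m)"
  have Re1: "0 < Re (1 + u z)" "0 < Re (1 - u z)" if "z \<in> D" for z
    using un[OF that] abs_Re_le_cmod[of "u z"] by auto
  have uhol: "u holomorphic_on D" unfolding u_def using Bhol t by (intro holomorphic_intros) auto
  have vhol: "v holomorphic_on D" unfolding v_def using uhol lampos Re1
    by (intro holomorphic_intros) (fastforce simp: complex_nonpos_Reals_iff)+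
  have \<sigma>hol: "\<sigma> holomorphic_on D" unfolding \<sigma>_def using vhol by (intro holomorphic_intros) auto
  have hhol: "h holomorphic_on D" unfolding h_def using \<sigma>hol by (intro holomorphic_intros)
  have oD: "open D" by (simp add: D_def)
  have img: "h z \<in> U_eps \<epsilon>" if "z \<in> D" for z
  proof -
    have nz: "1 + u z \<noteq> 0" "1 - u z \<noteq> 0" using Re1[OF that] by (auto simp: complex_eq_iff)
    have "Im (v z) = (Im (Ln (1 + u z)) - Im (Ln (1 - u z))) / lam"
      by (simp add: v_def Im_divide_of_real)
    moreover have "\<bar>Im (Ln (1 + u z)) - Im (Ln (1 - u z))\<bar> \<le> 2 * pi"
      using mpi_less_Im_Ln[OF nz(1)] Im_Ln_le_pi[OF nz(1)] mpi_less_Im_Ln[OF nz(2)] Im_Ln_le_pi[OF nz(2)]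
      by linarith
    ultimately have "\<bar>Im (v z)\<bar> \<le> 2 * pi / lam" using lampos by (simp add: abs_divide divide_right_mono)
    also have "\<dots> < \<delta>"
    proof -
      have "2 * pi < \<delta> * lam" using \<Lambda>big lamLam \<delta>
        by (smt (verit) mult_strict_left_mono)
      then show ?thesis using lampos by (simp add: field_simps)
    qed
    finally have "\<bar>Im (v z)\<bar> < \<delta>" .
    from thin[OF this, of "Re (v z)"] show ?thesis
      by (simp add: h_def \<sigma>_def)
  qed
  have h0: "h 0 = 0"
  proof -
    have "u 0 = 0" by (simp add: u_def B0)
    then have "v 0 = 0" by (simp add: v_def)
    then have "\<sigma> 0 = 0" by (simp add: \<sigma>_def)
    then show ?thesis using m1 by (simp add: h_def power_0_left)
  qed
  have h\<zeta>: "\<sigma> \<zeta> = 1"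
  proof -
    have "a * cnj a = complex_of_real (t^2)" unfolding t_def by (rule complex_norm_square[symmetric])
    then have "u \<zeta> = complex_of_real t" using t
      by (simp add: u_def a_def[symmetric] power2_eq_square field_simps)
    then have "Ln (1 + u \<zeta>) - Ln (1 - u \<zeta>) = complex_of_real lam"
      using t by (simp add: lam_def Ln_of_real[symmetric])
    then have "v \<zeta> = 1" using lampos by (simp add: v_def)
    then show ?thesis by (simp add: \<sigma>_def cos_of_real[symmetric])
  qed
  have wder: "\<forall>k<m. (deriv ^^ k) h (w j) = 0" if "j \<in> J" for j
  proof (intro allI impI)
    fix k assume k: "k < m"
    have wjD: "w j \<in> D" using wn[OF that] by (simp add: D_def)
    have "\<sigma> (w j) = 0"
    proof -
      have "u (w j) = 0" by (simp add: u_def Bw[OF that])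
      then show ?thesis by (simp add: v_def \<sigma>_def)
    qed
    then obtain q where q: "q holomorphic_on D" "\<And>z. z \<in> D \<Longrightarrow> \<sigma> z = (z - w j) * q z"
      using factor_at[OF \<sigma>hol oD wjD] by blast
    show "(deriv ^^ k) h (w j) = 0"
    proof (rule hd_zero[of "\<lambda>z. q z ^ m * (\<Sum>i<m. (1 - \<sigma> z ^ m) ^ i)" D])
      show "(\<lambda>z. q z ^ m * (\<Sum>i<m. (1 - \<sigma> z ^ m) ^ i)) holomorphic_on D"
        using q(1) \<sigma>hol by (intro holomorphic_intros)
      fix z assume "z \<in> D"
      have "h z = (1 - (1 - \<sigma> z ^ m)) * (\<Sum>i<m. (1 - \<sigma> z ^ m) ^ i)"
        unfolding h_def by (rule one_diff_power_eq)
      also have "\<dots> = 0 + (z - w j) ^ m * (q z ^ m * (\<Sum>i<m. (1 - \<sigma> z ^ m) ^ i))"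
        using q(2)[OF \<open>z \<in> D\<close>] by (simp add: power_mult_distrib)
      finally show "h z = 0 + (z - w j) ^ m * (q z ^ m * (\<Sum>i<m. (1 - \<sigma> z ^ m) ^ i))" .
    qed (use oD wjD k in auto)
  qed
  have zder: "\<forall>k\<in>{1..m-1}. (deriv ^^ k) h \<zeta> = 0"
  proof
    fix k assume k: "k \<in> {1..m-1}"
    have k': "k < m" "0 < k" using k m1 by auto
    have "(\<lambda>z. 1 - \<sigma> z) \<zeta> = 0" using h\<zeta> by simp
    then obtain q where q: "q holomorphic_on D" "\<And>z. z \<in> D \<Longrightarrow> 1 - \<sigma> z = (z - \<zeta>) * q z"
    proof -
      have "(\<lambda>z. 1 - \<sigma> z) holomorphic_on D" using \<sigma>hol by (intro holomorphic_intros)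
      from factor_at[OF this oD \<zeta>D] h\<zeta> show ?thesis using that by auto
    qed
    show "(deriv ^^ k) h \<zeta> = 0"
    proof (rule hd_zero[where g="\<lambda>z. (-1) * (q z * (\<Sum>i<m. \<sigma> z ^ i)) ^ m" and S=D and c=1])
      show "(\<lambda>z. (-1) * (q z * (\<Sum>i<m. \<sigma> z ^ i)) ^ m) holomorphic_on D"
        using q(1) \<sigma>hol by (intro holomorphic_intros)
      fix z assume "z \<in> D"
      have "h z = 1 - ((1 - \<sigma> z) * (\<Sum>i<m. \<sigma> z ^ i)) ^ m"
        unfolding h_def by (simp only: one_diff_power_eq)
      also have "\<dots> = 1 + (z - \<zeta>) ^ m * ((-1) * (q z * (\<Sum>i<m. \<sigma> z ^ i)) ^ m)"
        using q(2)[OF \<open>z \<in> D\<close>] by (simp add: power_mult_distrib)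
      finally show "h z = 1 + (z - \<zeta>) ^ m * ((-1) * (q z * (\<Sum>i<m. \<sigma> z ^ i)) ^ m)" .
    qed (use oD \<zeta>D k' in auto)
  qed
  have "h \<zeta> = 1" using h\<zeta> m1 by (simp add: h_def power_0_left)
  show ?thesis
    apply (rule exI[of _ h], rule exI[of _ \<zeta>])
    using hhol \<zeta>D img h0 wder zder \<open>h \<zeta> = 1\<close> unfolding D_def J_def by auto
qed

end
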